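(* Let $p$ be a prime such that $2$ is a generator of the multiplicative group $(\mathbb{Z}/p\mathbb{Z})^*$, and let $F_{mt}:\mathbb{F}_p^2\to\mathbb{F}_p^2$ be the map $F_{mt}(x,y)=(x^2y(x-y),\;2xy^2(x-y))$, where $\mathbb{F}_p=\mathbb{Z}/p\mathbb{Z}$. Then there exists $N\ge 1$ such that the $N$-th iterate $F_{mt}^{\circ N}$ sends every point of $\mathbb{F}_p^2$ to $(0,0)$.
   Context: $F_{mt}$ is the reduction modulo $p$ of the integer polynomial map $(x,y)\mapsto(x^2y(x-y),\,2xy^2(x-y))$ (called the "multiplicative trap"); $F_{mt}^{\circ N}$ denotes its $N$-fold composition with itself. *)

theory Defs
  imports "HOL-Number_Theory.Number_Theory"
begin

text \<open>The "multiplicative trap" map on F_p^2, with F_p represented by the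
residues {0..<p} of int and every coordinate reduced modulo p.\<close>
definition F_mt :: "int \<Rightarrow> int \<times> int \<Rightarrow> int \<times> int" where
  "F_mt p = (\<lambda>(x, y). ((x^2 * y * (x - y)) mod p, (2 * x * y^2 * (x - y)) mod p))"

end

theory Submission
  imports Defs "HOL-Number_Theory.Residue_Primitive_Roots"
begin

lemma F_zero: "(F_mt p ^^ n) (0,0) = (0,0)"
  by (induction n) (auto simp: F_mt_def)

lemma key:
  fixes p x y :: int
  assumes "p > 0" "0 \<le> x" "x < p" "0 \<le> y" "y < p" "[x = 2^k * y] (mod p)"
  shows "(F_mt p ^^ Suc k) (x,y) = (0,0)"
  using assms(2-)
proof (induction k arbitrary: x y)
  case 0
  then have "x mod p = y mod p" by (simp add: cong_def)
  then have "x = y" using 0 by simp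
  then show ?case by (simp add: F_mt_def)
next
  case (Suc k)
  define X where "X = x^2 * y * (x - y)"
  define Y where "Y = 2 * x * y^2 * (x - y)"
  have F: "F_mt p (x,y) = (X mod p, Y mod p)" by (simp add: F_mt_def X_def Y_def)
  have c1: "[2^k * (Y mod p) = 2^k * Y] (mod p)"
    by (intro cong_mult cong_refl) (simp add: cong_def)
  have e: "2^k * Y = (2^Suc k * y) * (x*y*(x-y))" by (simp add: Y_def power2_eq_square algebra_simps)
  have c2: "[(2^Suc k * y) * (x*y*(x-y)) = x * (x*y*(x-y))] (mod p)"
    using Suc.prems(5) by (intro cong_mult cong_refl) (simp add: cong_sym)
  have e2: "x * (x*y*(x-y)) = X" by (simp add: X_def power2_eq_square algebra_simps)
  have c3: "[X mod p = X] (mod p)" by (simp add: cong_def)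
  have "[X mod p = 2^k * (Y mod p)] (mod p)"
    using c1 c2 c3 e e2 by (metis cong_sym cong_trans)
  then have "(F_mt p ^^ Suc k) (X mod p, Y mod p) = (0,0)"
    using Suc.IH assms(1) by simp
  then show ?case using F by (simp add: funpow_Suc_right del: funpow.simps)
qed

theorem mainTheorem2:
  fixes p :: nat
  assumes "prime p"
    and "ord p 2 = p - 1"
  shows "\<exists>N::nat. N \<ge> 1 \<and>
           (\<forall>x\<in>{0..<int p}. \<forall>y\<in>{0..<int p}. (F_mt (int p) ^^ N) (x, y) = (0, 0))"
proof (intro exI[of _ "p - 1"] conjI ballI)
  have p2: "p \<ge> 2" using assms(1) prime_ge_2_nat by blast
  show "1 \<le> p - 1" using p2 by simp
  have cop: "coprime p 2" using assms(2) p2 ord_gt_0_iff[of p 2] by simp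
  have tot: "totient p = p - 1" using assms(1) totient_prime by blast
  have prim: "residue_primroot p 2"
    using cop tot assms(2) p2 by (simp add: residue_primroot_def)
  have bij: "bij_betw (\<lambda>i. 2 ^ i mod p) {..<p-1} {0<..<p}"
    using residue_primroot_is_generator[OF _ prim] p2 tot totatives_prime[OF assms(1)] by simp
  fix x y assume x: "x \<in> {0..<int p}" and y: "y \<in> {0..<int p}"
  show "(F_mt (int p) ^^ (p - 1)) (x, y) = (0, 0)"
  proof (cases "x = 0 \<or> y = 0")
    case True
    then have "F_mt (int p) (x,y) = (0,0)" by (auto simp: F_mt_def)
    moreover have "p - 1 = Suc (p - 2)" using p2 by simp
    ultimately show ?thesis using F_zero
      by (metis funpow_Suc_right o_apply)
  next
    case False
    define xn where "xn = nat x"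
    define yn where "yn = nat y"
    have xn: "x = int xn" "0 < xn" "xn < p" using x False by (auto simp: xn_def)
    have yn: "y = int yn" "0 < yn" "yn < p" using y False by (auto simp: yn_def)
    have ndx: "\<not> p dvd xn" using xn by (auto dest: dvd_imp_le)
    have ndy: "\<not> p dvd yn" using yn by (auto dest: dvd_imp_le)
    define r where "r = xn * yn^(p-2) mod p"
    have "\<not> p dvd xn * yn^(p-2)"
      using ndx ndy assms(1) by (metis prime_dvd_mult_iff prime_dvd_power)
    then have "r \<in> {0<..<p}" using p2 by (auto simp: r_def dvd_eq_mod_eq_0)
    then obtain k where k: "k < p - 1" "2^k mod p = r"
      using bij unfolding bij_betw_def by (metis (no_types, lifting) imageE lessThan_iff)
    have ferm: "[yn^(p-1) = 1] (mod p)" using fermat_theorem[OF assms(1) ndy] .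
    have "[2^k * yn = r * yn] (mod p)" using k(2) by (metis cong_def mod_mult_left_eq)
    also have "[r * yn = xn * yn^(p-2) * yn] (mod p)" by (simp add: r_def cong_def mod_mult_left_eq)
    also have "xn * yn^(p-2) * yn = xn * yn^(p-1)"
      using p2 by (metis Suc_diff_Suc Suc_1 diff_Suc_1 mult.assoc power_Suc2 less_le_trans one_less_numeral_iff semiring_norm(76) less_2_cases_iff)
    also have "[xn * yn^(p-1) = xn * 1] (mod p)" using ferm by (intro cong_mult cong_refl)
    finally have "[2^k * yn = xn] (mod p)" by simp
    then have "[int (2^k * yn) = int xn] (mod int p)" using cong_int_iff by blast
    then have c: "[x = 2^k * y] (mod int p)" using xn yn by (simp add: cong_sym)
    have z: "(F_mt (int p) ^^ Suc k) (x,y) = (0,0)"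
      using key[OF _ _ _ _ _ c] x y p2 by auto
    have "p - 1 = (p - 2 - k) + Suc k" using k p2 by simp
    then show ?thesis using z F_zero by (metis funpow_add o_apply)
  qed
qed

end
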